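(* Let $G=(V,E)$ be a graph containing at least one cycle, with $n$ vertices, $m$ edges and $k(G)$ connected components, and let $i$ be a nonnegative integer. Then $g(G)>n-k(G)-i$ if and only if \[[x^i]T_G(x,1)=\binom{m-i-1}{n-k(G)-i}.\]
   Context: $T_G(x,y)$ is the Tutte polynomial of $G$, i.e. $T_G(x,y)=\sum_{A\subseteq E}(x-1)^{r-rk(A)}(y-1)^{|A|-rk(A)}$ with $rk(A)=n-k(A)$, $k(A)$ the number of components of the spanning subgraph $(V,A)$, and $r=n-k(G)$. $[x^i]f(x)$ denotes the coefficient of $x^i$. The girth $g(G)$ is the length of a shortest cycle of $G$. *)

theory Defs
  imports "HOL-Computational_Algebra.Polynomial"
begin

text \<open>Finite multigraphs (loops and parallel edges allowed): a finite vertex set V,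
a finite edge set E, and an incidence map inc giving the set of (one or two) end vertices.\<close>

definition multigraph :: "'v set \<Rightarrow> 'e set \<Rightarrow> ('e \<Rightarrow> 'v set) \<Rightarrow> bool" where
  "multigraph V E inc \<longleftrightarrow> finite V \<and> finite E \<and>
     (\<forall>e\<in>E. inc e \<subseteq> V \<and> 1 \<le> card (inc e) \<and> card (inc e) \<le> 2)"

definition adj_in :: "('e \<Rightarrow> 'v set) \<Rightarrow> 'e set \<Rightarrow> 'v \<Rightarrow> 'v \<Rightarrow> bool" where
  "adj_in inc A u v \<longleftrightarrow> (\<exists>e\<in>A. inc e = {u, v})"

definition num_comps :: "'v set \<Rightarrow> ('e \<Rightarrow> 'v set) \<Rightarrow> 'e set \<Rightarrow> nat" where
  "num_comps V inc A =
     card (V // {(u, v). u \<in> V \<and> v \<in> V \<and> (adj_in inc A)\<^sup>*\<^sup>* u v})"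

definition rank_of :: "'v set \<Rightarrow> ('e \<Rightarrow> 'v set) \<Rightarrow> 'e set \<Rightarrow> nat" where
  "rank_of V inc A = card V - num_comps V inc A"

definition tutte_in_x :: "'v set \<Rightarrow> 'e set \<Rightarrow> ('e \<Rightarrow> 'v set) \<Rightarrow> real \<Rightarrow> real poly" where
  "tutte_in_x V E inc y =
     (\<Sum>A\<in>Pow E. smult ((y - 1) ^ (card A - rank_of V inc A))
                   ([:-1, 1:] ^ (rank_of V inc E - rank_of V inc A)))"

text \<open>A cycle of length l: distinct vertices v_0..v_{l-1} and distinct edges e_0..e_{l-1}
  with e_j joining v_j and v_{j+1 mod l} (l = 1: loop, l = 2: pair of parallel edges).\<close>
definition has_cycle_len :: "'v set \<Rightarrow> 'e set \<Rightarrow> ('e \<Rightarrow> 'v set) \<Rightarrow> nat \<Rightarrow> bool" where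
  "has_cycle_len V E inc l \<longleftrightarrow> l \<ge> 1 \<and> (\<exists>vs es. length vs = l \<and> length es = l \<and>
      distinct vs \<and> distinct es \<and> set vs \<subseteq> V \<and> set es \<subseteq> E \<and>
      (\<forall>j<l. inc (es ! j) = {vs ! j, vs ! ((j + 1) mod l)}))"

definition has_cycle :: "'v set \<Rightarrow> 'e set \<Rightarrow> ('e \<Rightarrow> 'v set) \<Rightarrow> bool" where
  "has_cycle V E inc \<longleftrightarrow> (\<exists>l. has_cycle_len V E inc l)"

definition girth :: "'v set \<Rightarrow> 'e set \<Rightarrow> ('e \<Rightarrow> 'v set) \<Rightarrow> nat" where
  "girth V E inc = (LEAST l. has_cycle_len V E inc l)"

text \<open>Binomial coefficient binom(a,b) with integer arguments, using the convention
  binom(a,b) = 0 for b < 0 (a is nonnegative whenever b is, in the statement below).\<close>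
definition int_binom :: "int \<Rightarrow> int \<Rightarrow> real" where
  "int_binom a b = (if b < 0 then 0 else (of_int a) gchoose (nat b))"

end

theory Submission
  imports Defs
begin


abbreviation XX :: "real poly" where "XX \<equiv> [:-1, 1:]"

definition matroid :: "'e set \<Rightarrow> 'e set set \<Rightarrow> bool" where
 "matroid E I \<longleftrightarrow> finite E \<and> I \<subseteq> Pow E \<and> {} \<in> I \<and> (\<forall>A\<in>I. \<forall>B. B \<subseteq> A \<longrightarrow> B \<in> I)
   \<and> (\<forall>A\<in>I. \<forall>B\<in>I. card A < card B \<longrightarrow> (\<exists>x\<in>B-A. insert x A \<in> I))"

definition rk :: "'e set set \<Rightarrow> nat" where "rk I = Max (card ` I)"

definition PP :: "'e set set \<Rightarrow> real poly" where "PP I = (\<Sum>F\<in>I. XX ^ (rk I - card F))"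

definition dep :: "'e set \<Rightarrow> 'e set set \<Rightarrow> nat \<Rightarrow> bool" where
  "dep E I k \<longleftrightarrow> (\<exists>A. A \<subseteq> E \<and> A \<notin> I \<and> card A \<le> k)"

lemma coeff_XX_hi: "n < j \<Longrightarrow> coeff (XX ^ n) j = 0"
  by (metis coeff_eq_0 degree_linear_power)

lemma coeff_XX_top: "coeff (XX ^ n) n = 1"
  by (rule coeff_linear_power)

lemma m_parts: assumes "matroid E I"
  shows "finite E" "I \<subseteq> Pow E" "{} \<in> I" "\<forall>A\<in>I. \<forall>B. B \<subseteq> A \<longrightarrow> B \<in> I"
    "\<forall>A\<in>I. \<forall>B\<in>I. card A < card B \<longrightarrow> (\<exists>x\<in>B-A. insert x A \<in> I)"
  using assms by (simp_all add: matroid_def)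
lemma m_finI: assumes "matroid E I" shows "finite I"
  using m_parts(1,2)[OF assms] finite_subset[of I "Pow E"] by simp
lemma m_sub: assumes "matroid E I" "A \<in> I" shows "A \<subseteq> E"
  using m_parts(2)[OF assms(1)] assms(2) by blast
lemma m_fin: assumes "matroid E I" "A \<in> I" shows "finite A"
  using m_sub[OF assms] m_parts(1)[OF assms(1)] finite_subset by blast
lemma m_empty: assumes "matroid E I" shows "{} \<in> I"
  using m_parts(3)[OF assms] .
lemma m_down: assumes "matroid E I" "A \<in> I" "B \<subseteq> A" shows "B \<in> I"
  using m_parts(4)[OF assms(1)] assms(2,3) by blast
lemma m_aug: assumes "matroid E I" "A \<in> I" "B \<in> I" "card A < card B" shows "\<exists>x\<in>B-A. insert x A \<in> I"
  using m_parts(5)[OF assms(1)] assms(2-4) by blast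

lemma rk_ge: "matroid E I \<Longrightarrow> A \<in> I \<Longrightarrow> card A \<le> rk I"
  unfolding rk_def by (simp add: m_finI)
lemma rk_ex: "matroid E I \<Longrightarrow> \<exists>B\<in>I. card B = rk I"
proof -
  assume m: "matroid E I"
  have "card ` I \<noteq> {}" using m_empty[OF m] by blast
  then have "rk I \<in> card ` I" unfolding rk_def using m_finI[OF m] by (intro Max_in) auto
  then show ?thesis by auto
qed
lemma rk_le_card: assumes m: "matroid E I" shows "rk I \<le> card E"
proof -
  obtain B where "B \<in> I" "card B = rk I" using rk_ex[OF m] by blast
  moreover have "finite E" using m by (simp add: matroid_def)
  ultimately show ?thesis using m_sub[OF m] card_mono[of E B] by simp
qed
lemma rk_eqI: "matroid E I \<Longrightarrow> (\<And>A. A \<in> I \<Longrightarrow> card A \<le> t) \<Longrightarrow> B \<in> I \<Longrightarrow> card B = t \<Longrightarrow> rk I = t"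
proof -
  assume m: "matroid E I" and h: "\<And>A. A \<in> I \<Longrightarrow> card A \<le> t" and B: "B \<in> I" "card B = t"
  obtain C where "C \<in> I" "card C = rk I" using rk_ex[OF m] by blast
  then show "rk I = t" using h[of C] rk_ge[OF m B(1)] B by simp
qed

lemma m_extend_aux:
  assumes m: "matroid E I"
  shows "\<forall>A. A \<in> I \<longrightarrow> B \<in> I \<longrightarrow> card A \<le> card B \<longrightarrow> card B - card A = d \<longrightarrow>
    (\<exists>C\<in>I. A \<subseteq> C \<and> C \<subseteq> A \<union> B \<and> card C = card B)"
proof (induction d)
  case 0
  show ?case
  proof (intro allI impI)
    fix A assume "A \<in> I" "B \<in> I" "card A \<le> card B" "card B - card A = 0"
    then show "\<exists>C\<in>I. A \<subseteq> C \<and> C \<subseteq> A \<union> B \<and> card C = card B"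
      by (intro bexI[of _ A]) auto
  qed
next
  case (Suc d)
  show ?case
  proof (intro allI impI)
    fix A assume A: "A \<in> I" and B: "B \<in> I" and le: "card A \<le> card B" and dd: "card B - card A = Suc d"
    have lt: "card A < card B" using dd by simp
    obtain x where x: "x \<in> B - A" "insert x A \<in> I" using m_aug[OF m A B lt] by blast
    have fA: "finite A" using m_fin[OF m A] .
    have ci: "card (insert x A) = Suc (card A)" using x fA by simp
    have "card (insert x A) \<le> card B" using lt ci by simp
    moreover have "card B - card (insert x A) = d" using dd ci by simp
    ultimately obtain C where C: "C\<in>I" "insert x A \<subseteq> C" "C \<subseteq> insert x A \<union> B" "card C = card B"
      using Suc.IH x(2) B by blast
    show "\<exists>C\<in>I. A \<subseteq> C \<and> C \<subseteq> A \<union> B \<and> card C = card B"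
      using C x by (intro bexI[of _ C]) auto
  qed
qed

lemma m_extend:
  assumes m: "matroid E I" and "A \<in> I" "B \<in> I" "card A \<le> card B"
  shows "\<exists>C\<in>I. A \<subseteq> C \<and> C \<subseteq> A \<union> B \<and> card C = card B"
  using m_extend_aux[OF m, of B "card B - card A"] assms by blast

lemma coeff_PP_hi: "matroid E I \<Longrightarrow> rk I < j \<Longrightarrow> coeff (PP I) j = 0"
  unfolding PP_def coeff_sum by (intro sum.neutral) (auto intro: coeff_XX_hi)

lemma coeff_PP_top: assumes m: "matroid E I" shows "coeff (PP I) (rk I) = 1"
proof -
  have S0: "(\<Sum>F\<in>I-{{}}. coeff (XX ^ (rk I - card F)) (rk I)) = 0"
  proof (rule sum.neutral, rule ballI)
    fix F assume F0: "F \<in> I - {{}}"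
    then have F: "F \<in> I" "F \<noteq> {}" by auto
    have "card F \<noteq> 0" using F m_fin[OF m] by auto
    moreover have "card F \<le> rk I" using rk_ge[OF m F(1)] .
    ultimately show "coeff (XX ^ (rk I - card F)) (rk I) = 0" by (intro coeff_XX_hi) auto
  qed
  have "coeff (PP I) (rk I) = (\<Sum>F\<in>I. coeff (XX ^ (rk I - card F)) (rk I))"
    unfolding PP_def coeff_sum ..
  also have "\<dots> = coeff (XX ^ (rk I - card ({}::'a set))) (rk I) + (\<Sum>F\<in>I-{{}}. coeff (XX ^ (rk I - card F)) (rk I))"
    using m_finI[OF m] m_empty[OF m] by (rule sum.remove)
  also have "\<dots> = 1" unfolding S0 using coeff_XX_top[of "rk I"] by simp
  finally show ?thesis .
qed

lemma not_dep0: assumes m: "matroid E I" shows "\<not> dep E I 0"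
proof
  assume "dep E I 0"
  then obtain A where A: "A \<subseteq> E" "A \<notin> I" "card A \<le> 0" unfolding dep_def by blast
  have "finite E" using m by (simp add: matroid_def)
  then have "A = {}" using A finite_subset by fastforce
  then show False using A m_empty[OF m] by simp
qed

lemma matroid_del: assumes m: "matroid E I"
  shows "matroid (E - {e}) {A\<in>I. e \<notin> A}"
  unfolding matroid_def
proof (intro conjI ballI allI impI)
  show "finite (E - {e})" using m by (simp add: matroid_def)
  show "{A \<in> I. e \<notin> A} \<subseteq> Pow (E - {e})" using m_sub[OF m] by auto
  show "{} \<in> {A \<in> I. e \<notin> A}" using m_empty[OF m] by simp
next
  fix A B assume "A \<in> {A \<in> I. e \<notin> A}" "B \<subseteq> A"
  then show "B \<in> {A \<in> I. e \<notin> A}" using m_down[OF m] by blast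
next
  fix A B assume A: "A \<in> {A \<in> I. e \<notin> A}" and B: "B \<in> {A \<in> I. e \<notin> A}" and c: "card A < card B"
  then obtain x where "x \<in> B - A" "insert x A \<in> I" using m_aug[OF m, of A B] by auto
  then show "\<exists>x\<in>B - A. insert x A \<in> {A \<in> I. e \<notin> A}" using A B by auto
qed

lemma matroid_con: assumes m: "matroid E I" and e: "{e} \<in> I"
  shows "matroid (E - {e}) {A. e \<notin> A \<and> insert e A \<in> I}"
  unfolding matroid_def
proof (intro conjI ballI allI impI)
  show "finite (E - {e})" using m by (simp add: matroid_def)
  show "{A. e \<notin> A \<and> insert e A \<in> I} \<subseteq> Pow (E - {e})" using m_sub[OF m] by auto
  show "{} \<in> {A. e \<notin> A \<and> insert e A \<in> I}" using e by simp
next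
  fix A B assume "A \<in> {A. e \<notin> A \<and> insert e A \<in> I}" "B \<subseteq> A"
  then show "B \<in> {A. e \<notin> A \<and> insert e A \<in> I}" using m_down[OF m] by blast
next
  fix A B assume A: "A \<in> {A. e \<notin> A \<and> insert e A \<in> I}" and B: "B \<in> {A. e \<notin> A \<and> insert e A \<in> I}"
    and c: "card A < card B"
  have fA: "finite A" using A m_fin[OF m, of "insert e A"] by auto
  have fB: "finite B" using B m_fin[OF m, of "insert e B"] by auto
  have "card (insert e A) < card (insert e B)" using A B fA fB c by simp
  then obtain x where x: "x \<in> insert e B - insert e A" "insert x (insert e A) \<in> I"
    using m_aug[OF m, of "insert e A" "insert e B"] A B by auto
  then show "\<exists>x\<in>B - A. insert x A \<in> {A. e \<notin> A \<and> insert e A \<in> I}"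
  proof (intro bexI[of _ x])
    have "insert e (insert x A) = insert x (insert e A)" by blast
    then show "insert x A \<in> {A. e \<notin> A \<and> insert e A \<in> I}" using x A by auto
    show "x \<in> B - A" using x by auto
  qed
qed

lemma PP_split: assumes m: "matroid E I"
  shows "PP I = (\<Sum>A\<in>{A\<in>I. e \<notin> A}. XX ^ (rk I - card A)) + (\<Sum>A\<in>{A. e \<notin> A \<and> insert e A \<in> I}. XX ^ (rk I - Suc (card A)))"
proof -
  have fI: "finite I" using m_finI[OF m] .
  have "PP I = (\<Sum>A\<in>{A\<in>I. e \<notin> A}. XX ^ (rk I - card A)) + (\<Sum>A\<in>{A\<in>I. e \<in> A}. XX ^ (rk I - card A))"
    unfolding PP_def using fI by (subst sum.union_disjoint[symmetric]) (auto intro: sum.cong)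
  also have "(\<Sum>A\<in>{A\<in>I. e \<in> A}. XX ^ (rk I - card A)) = (\<Sum>A\<in>insert e ` {A. e \<notin> A \<and> insert e A \<in> I}. XX ^ (rk I - card A))"
  proof (rule sum.cong)
    show "{A \<in> I. e \<in> A} = insert e ` {A. e \<notin> A \<and> insert e A \<in> I}"
    proof
      show "{A \<in> I. e \<in> A} \<subseteq> insert e ` {A. e \<notin> A \<and> insert e A \<in> I}"
      proof
        fix A assume "A \<in> {A \<in> I. e \<in> A}"
        then show "A \<in> insert e ` {A. e \<notin> A \<and> insert e A \<in> I}"
          by (intro image_eqI[of _ _ "A - {e}"]) (auto simp: insert_absorb)
      qed
    qed auto
  qed simp
  also have "\<dots> = (\<Sum>A\<in>{A. e \<notin> A \<and> insert e A \<in> I}. XX ^ (rk I - card (insert e A)))"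
    by (subst sum.reindex) (auto simp: inj_on_def)
  also have "\<dots> = (\<Sum>A\<in>{A. e \<notin> A \<and> insert e A \<in> I}. XX ^ (rk I - Suc (card A)))"
  proof (intro sum.cong refl)
    fix A assume "A \<in> {A. e \<notin> A \<and> insert e A \<in> I}"
    then have "card (insert e A) = Suc (card A)" using m_fin[OF m, of "insert e A"] by auto
    then show "XX ^ (rk I - card (insert e A)) = XX ^ (rk I - Suc (card A))" by simp
  qed
  finally show ?thesis .
qed




lemma XX_step: "XX ^ Suc k + XX ^ k = pCons 0 (XX ^ k)"
  by simp

lemma matroid_loopdel: assumes m: "matroid E I" and e: "{e} \<notin> I"
  shows "matroid (E - {e}) I"
proof -
  have sub: "I \<subseteq> Pow (E - {e})"
  proof
    fix A assume A: "A \<in> I"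
    have "e \<notin> A"
    proof
      assume "e \<in> A" then have "{e} \<subseteq> A" by simp
      then show False using m_down[OF m A] e by blast
    qed
    then show "A \<in> Pow (E - {e})" using m_sub[OF m A] by blast
  qed
  have "finite (E - {e})" using m_parts(1)[OF m] by simp
  then show ?thesis unfolding matroid_def using sub m_parts(3-5)[OF m] by blast
qed

lemma dep_mono_ground: "dep E' I k \<Longrightarrow> E' \<subseteq> E \<Longrightarrow> dep E I k"
  unfolding dep_def by blast

lemma main_abs:
  assumes "matroid E I" "i \<le> rk I"
  shows "coeff (PP I) i \<le> real ((card E - i - 1) choose (rk I - i)) \<and>
    (coeff (PP I) i = real ((card E - i - 1) choose (rk I - i)) \<longleftrightarrow> \<not> dep E I (rk I - i))"
  using assms
proof (induction "card E" arbitrary: E I i rule: less_induct)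
  case less
  note m = less.prems(1)
  define r where "r = rk I"
  define mm where "mm = card E"
  have fE: "finite E" using m_parts(1)[OF m] .
  have rm: "r \<le> mm" unfolding r_def mm_def using rk_le_card[OF m] .
  show ?case
  proof (cases "i = r")
    case True
    then show ?thesis using coeff_PP_top[OF m] not_dep0[OF m] unfolding r_def by simp
  next
    case False
    then have ir: "i < r" using less.prems(2) unfolding r_def by simp
    then have "E \<noteq> {}" using rm fE unfolding mm_def by auto
    then obtain e where eE: "e \<in> E" by blast
    have cE': "card (E - {e}) = mm - 1" using eE fE unfolding mm_def by simp
    have "0 < card E" using eE fE card_gt_0_iff by blast
    then have lessE: "card (E - {e}) < card E" using eE fE by simp
    obtain B0 where B0: "B0 \<in> I" "card B0 = r" using rk_ex[OF m] unfolding r_def by blast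
    show ?thesis
    proof (cases "{e} \<in> I")
      case False
      have m': "matroid (E - {e}) I" using matroid_loopdel[OF m False] .
      have rm': "r \<le> mm - 1" using rk_le_card[OF m'] cE' unfolding r_def by simp
      have IH: "coeff (PP I) i \<le> real ((card (E - {e}) - i - 1) choose (rk I - i))"
        using less.hyps[OF lessE m' less.prems(2)] by blast
      define n where "n = mm - i - 2"
      define t where "t = r - i - 1"
      have h1: "card (E - {e}) - i - 1 = n" unfolding n_def cE' by simp
      have h2: "mm - i - 1 = Suc n" unfolding n_def using ir rm' by simp
      have h3: "r - i = Suc t" unfolding t_def using ir by simp
      have tn: "t \<le> n" unfolding t_def n_def using ir rm' by simp
      have pos: "0 < n choose t" using tn by simp
      have posr: "0 < real (n choose t)" using pos by simp
      have "coeff (PP I) i < real ((mm - i - 1) choose (r - i))"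
        using IH posr unfolding h2 h3 r_def[symmetric] h1 binomial_Suc_Suc of_nat_add by linarith
      moreover have "dep E I (r - i)" unfolding dep_def
        using False eE ir by (intro exI[of _ "{e}"]) auto
      ultimately show ?thesis unfolding r_def mm_def by simp
    next
      case True
      note e1 = True
      define J where "J = {A. e \<notin> A \<and> insert e A \<in> I}"
      have mJ: "matroid (E - {e}) J" unfolding J_def using matroid_con[OF m True] .
      have r1: "1 \<le> r" using rk_ge[OF m True] unfolding r_def by simp
      have Jle: "\<And>A. A \<in> J \<Longrightarrow> card A \<le> r - 1"
      proof -
        fix A assume A: "A \<in> J"
        have "card (insert e A) \<le> r" using rk_ge[OF m, of "insert e A"] A unfolding J_def r_def by blast
        moreover have "finite A" using m_fin[OF mJ A] .
        ultimately show "card A \<le> r - 1" using A unfolding J_def by simp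
      qed
      show ?thesis
      proof (cases "\<forall>A\<in>I. insert e A \<in> I")
        case True
        text \<open>coloop\<close>
        have eB0: "e \<in> B0"
        proof (rule ccontr)
          assume "e \<notin> B0"
          then have "card (insert e B0) = Suc r" using B0 m_fin[OF m B0(1)] by simp
          then show False using rk_ge[OF m, of "insert e B0"] True B0 unfolding r_def by simp
        qed
        have fB0: "finite B0" using m_fin[OF m B0(1)] .
        have B0J: "B0 - {e} \<in> J" unfolding J_def using eB0 B0 by (simp add: insert_absorb)
        have cB0e: "card (B0 - {e}) = r - 1" using eB0 B0 fB0 by simp
        have rJ: "rk J = r - 1" using rk_eqI[OF mJ Jle B0J cB0e] .
        have DJ: "{A\<in>I. e \<notin> A} = J"
        proof
          show "{A\<in>I. e \<notin> A} \<subseteq> J" using True unfolding J_def by blast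
          show "J \<subseteq> {A\<in>I. e \<notin> A}"
          proof
            fix A assume "A \<in> J"
            then have "e \<notin> A" "insert e A \<in> I" unfolding J_def by auto
            then show "A \<in> {A\<in>I. e \<notin> A}" using m_down[OF m, of "insert e A" A] by blast
          qed
        qed
        have PPI: "PP I = (\<Sum>A\<in>J. pCons 0 (XX ^ (rk J - card A)))"
        proof -
          have "PP I = (\<Sum>A\<in>J. XX ^ (r - card A)) + (\<Sum>A\<in>J. XX ^ (r - Suc (card A)))"
            using PP_split[OF m, of e] unfolding DJ r_def J_def by simp
          also have "\<dots> = (\<Sum>A\<in>J. XX ^ (r - card A) + XX ^ (r - Suc (card A)))"
            by (simp add: sum.distrib)
          also have "\<dots> = (\<Sum>A\<in>J. pCons 0 (XX ^ (rk J - card A)))"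
          proof (rule sum.cong[OF refl])
            fix A assume A: "A \<in> J"
            have a1: "r - card A = Suc (rk J - card A)" using Jle[OF A] r1 rJ by simp
            have a2: "r - Suc (card A) = rk J - card A" using rJ by simp
            show "XX ^ (r - card A) + XX ^ (r - Suc (card A)) = pCons 0 (XX ^ (rk J - card A))"
              unfolding a1 a2 by (rule XX_step)
          qed
          finally show ?thesis .
        qed
        have cPP1: "\<And>j. coeff (PP I) (Suc j) = coeff (PP J) j"
          unfolding PPI coeff_sum by (simp add: PP_def coeff_sum)
        have cPP2: "coeff (PP I) 0 = 0"
          unfolding PPI coeff_sum by simp
        note cPP = cPP1 cPP2
        show ?thesis
        proof (cases i)
          case 0
          show ?thesis
          proof (cases "r \<le> mm - 1")
            case True
            have pos: "0 < (mm - 1) choose r" using True by simp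
            have "\<not> E \<subseteq> B0"
            proof
              assume "E \<subseteq> B0" then have "mm \<le> r" unfolding mm_def using card_mono[OF fB0] B0 by metis
              then show False using True r1 by simp
            qed
            then obtain f where f: "f \<in> E" "f \<notin> B0" by blast
            define D where "D = insert f (B0 - {e})"
            have DE: "D \<subseteq> E" unfolding D_def using f m_sub[OF m B0(1)] by blast
            have cD: "card D = r" unfolding D_def using f fB0 cB0e r1 by simp
            have "D \<notin> I"
            proof
              assume "D \<in> I"
              have "e \<notin> D" unfolding D_def using f eB0 by auto
              then have "card (insert e D) = Suc r" using cD fB0 unfolding D_def by simp
              then show False using rk_ge[OF m, of "insert e D"] \<open>D \<in> I\<close> \<open>\<forall>A\<in>I. insert e A \<in> I\<close>
                unfolding r_def by simp
            qed
            then have "dep E I r" unfolding dep_def using DE cD by blast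
            then show ?thesis using cPP(2) pos 0 unfolding r_def mm_def by simp
          next
            case False
            then have "mm = r" using rm r1 by simp
            then have "B0 = E" using card_subset_eq[OF fE m_sub[OF m B0(1)]] B0 unfolding mm_def by simp
            then have nd: "\<not> dep E I r" unfolding dep_def using m_down[OF m B0(1)] by blast
            have "(mm - 1) choose r = 0" using \<open>mm = r\<close> r1 by simp
            then show ?thesis using cPP(2) nd 0 unfolding r_def mm_def by simp
          qed
        next
          case (Suc j)
          have jJ: "j \<le> rk J" using ir Suc rJ by simp
          have IH: "coeff (PP J) j \<le> real ((card (E - {e}) - j - 1) choose (rk J - j)) \<and>
            (coeff (PP J) j = real ((card (E - {e}) - j - 1) choose (rk J - j)) \<longleftrightarrow> \<not> dep (E - {e}) J (rk J - j))"
            using less.hyps[OF lessE mJ jJ] .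
          have a1: "card (E - {e}) - j - 1 = mm - i - 1" using cE' Suc by simp
          have a2: "rk J - j = r - i" using rJ Suc by simp
          have depeq: "dep (E - {e}) J (r - i) \<longleftrightarrow> dep E I (r - i)"
          proof
            assume "dep (E - {e}) J (r - i)"
            then obtain A where A: "A \<subseteq> E - {e}" "A \<notin> J" "card A \<le> r - i" unfolding dep_def by blast
            then have "A \<notin> I" using True unfolding J_def by blast
            then show "dep E I (r - i)" unfolding dep_def using A by blast
          next
            assume "dep E I (r - i)"
            then obtain A where A: "A \<subseteq> E" "A \<notin> I" "card A \<le> r - i" unfolding dep_def by blast
            have sub: "A \<subseteq> insert e (A - {e})" by blast
            have n1: "insert e (A - {e}) \<notin> I" using m_down[OF m _ sub] A(2) by blast
            have "card (A - {e}) \<le> card A" using fE A(1) by (meson card_Diff1_le finite_subset)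
            then show "dep (E - {e}) J (r - i)" unfolding dep_def J_def using n1 A
              by (intro exI[of _ "A - {e}"]) auto
          qed
          have IH': "coeff (PP J) j \<le> real ((mm - i - 1) choose (r - i)) \<and>
            (coeff (PP J) j = real ((mm - i - 1) choose (r - i)) \<longleftrightarrow> \<not> dep E I (r - i))"
            using IH unfolding a1 a2 depeq .
          have ci: "coeff (PP I) i = coeff (PP J) j" using cPP(1)[of j] Suc by simp
          show ?thesis unfolding r_def[symmetric] mm_def[symmetric] ci using IH' .
        qed
      next
        case False
        then obtain A0 where A0: "A0 \<in> I" "insert e A0 \<notin> I" by blast
        have eA0: "e \<notin> A0" using A0 by (auto simp: insert_absorb)
        define D where "D = {A\<in>I. e \<notin> A}"
        have mD: "matroid (E - {e}) D" unfolding D_def using matroid_del[OF m] .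
        have cA0: "card A0 \<le> card B0" using rk_ge[OF m A0(1)] B0 unfolding r_def by simp
        obtain C where C: "C \<in> I" "A0 \<subseteq> C" "C \<subseteq> A0 \<union> B0" "card C = card B0"
          using m_extend[OF m A0(1) B0(1) cA0] by blast
        have "e \<notin> C"
        proof
          assume "e \<in> C" then have "insert e A0 \<subseteq> C" using C by blast
          then show False using m_down[OF m C(1)] A0 by blast
        qed
        then have CD: "C \<in> D" unfolding D_def using C by blast
        have rD: "rk D = r" using rk_eqI[OF mD, of r C] CD C B0 rk_ge[OF m] unfolding D_def r_def by simp
        have c1: "card {e} \<le> card B0" using rk_ge[OF m e1] B0 unfolding r_def by simp
        obtain C2 where C2: "C2 \<in> I" "{e} \<subseteq> C2" "card C2 = card B0"
          using m_extend[OF m e1 B0(1) c1] by blast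
        have fC2: "finite C2" using m_fin[OF m C2(1)] .
        have C2J: "C2 - {e} \<in> J" unfolding J_def using C2 by (simp add: insert_absorb)
        have cC2: "card (C2 - {e}) = r - 1" using C2 B0 fC2 by simp
        have rJ: "rk J = r - 1" using rk_eqI[OF mJ Jle C2J cC2] .
        have PPI: "PP I = PP D + PP J"
        proof -
          have "PP I = (\<Sum>A\<in>D. XX ^ (r - card A)) + (\<Sum>A\<in>J. XX ^ (r - Suc (card A)))"
            using PP_split[OF m, of e] unfolding D_def r_def J_def by simp
          also have "\<dots> = PP D + PP J" unfolding PP_def rD rJ by simp
          finally show ?thesis .
        qed
        have rm1: "r \<le> mm - 1" using rk_le_card[OF mD] rD cE' by simp
        have iJ: "i \<le> rk J" using ir rJ by simp
        have iD: "i \<le> rk D" using ir rD by simp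
        have IHD: "coeff (PP D) i \<le> real ((card (E - {e}) - i - 1) choose (rk D - i)) \<and>
            (coeff (PP D) i = real ((card (E - {e}) - i - 1) choose (rk D - i)) \<longleftrightarrow> \<not> dep (E - {e}) D (rk D - i))"
          using less.hyps[OF lessE mD iD] .
        have IHJ: "coeff (PP J) i \<le> real ((card (E - {e}) - i - 1) choose (rk J - i)) \<and>
            (coeff (PP J) i = real ((card (E - {e}) - i - 1) choose (rk J - i)) \<longleftrightarrow> \<not> dep (E - {e}) J (rk J - i))"
          using less.hyps[OF lessE mJ iJ] .
        define n where "n = mm - i - 2"
        define t where "t = r - i - 1"
        have h1: "card (E - {e}) - i - 1 = n" unfolding n_def cE' by simp
        have h2: "mm - i - 1 = Suc n" unfolding n_def using ir rm1 by simp
        have h3: "r - i = Suc t" unfolding t_def using ir by simp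
        have h4: "rk J - i = t" unfolding t_def rJ by simp
        have h5: "rk D - i = Suc t" using h3 rD by simp
        have depeq: "dep E I (Suc t) \<longleftrightarrow> dep (E - {e}) D (Suc t) \<or> dep (E - {e}) J t"
        proof
          assume "dep E I (Suc t)"
          then obtain A where A: "A \<subseteq> E" "A \<notin> I" "card A \<le> Suc t" unfolding dep_def by blast
          have fA: "finite A" using fE A(1) finite_subset by blast
          show "dep (E - {e}) D (Suc t) \<or> dep (E - {e}) J t"
          proof (cases "e \<in> A")
            case False
            then show ?thesis unfolding dep_def D_def using A by blast
          next
            case True
            have cc: "card (A - {e}) \<le> t" using True fA A(3) by simp
            show ?thesis
            proof (cases "A - {e} \<in> I")
              case False
              then have "dep (E - {e}) D (Suc t)" unfolding dep_def D_def using A cc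
                by (intro exI[of _ "A - {e}"]) auto
              then show ?thesis ..
            next
              case True2: True
              have "insert e (A - {e}) = A" using True by blast
              then have "dep (E - {e}) J t" unfolding dep_def J_def using A cc
                by (intro exI[of _ "A - {e}"]) auto
              then show ?thesis ..
            qed
          qed
        next
          assume "dep (E - {e}) D (Suc t) \<or> dep (E - {e}) J t"
          then show "dep E I (Suc t)"
          proof
            assume "dep (E - {e}) D (Suc t)"
            then obtain A where A: "A \<subseteq> E - {e}" "A \<notin> D" "card A \<le> Suc t" unfolding dep_def by blast
            then show ?thesis unfolding dep_def D_def by blast
          next
            assume "dep (E - {e}) J t"
            then obtain A where A: "A \<subseteq> E - {e}" "A \<notin> J" "card A \<le> t" unfolding dep_def by blast
            have fA: "finite A" using fE A(1) finite_subset by blast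
            have "e \<notin> A" using A by blast
            then have "card (insert e A) \<le> Suc t" using fA A by simp
            moreover have "insert e A \<notin> I" using A \<open>e \<notin> A\<close> unfolding J_def by blast
            ultimately show ?thesis unfolding dep_def using A eE by (intro exI[of _ "insert e A"]) auto
          qed
        qed
        have pascal: "(Suc n choose Suc t) = (n choose t) + (n choose Suc t)" by simp
        have cI: "coeff (PP I) i = coeff (PP D) i + coeff (PP J) i" unfolding PPI by simp
        show ?thesis
          using IHD IHJ unfolding h1 h4 h5 r_def[symmetric] mm_def[symmetric] h2 h3 cI depeq pascal
          by auto
      qed
    qed
  qed
qed




definition conn :: "('e \<Rightarrow> 'v set) \<Rightarrow> 'e set \<Rightarrow> 'v \<Rightarrow> 'v \<Rightarrow> bool" where
  "conn inc A = (adj_in inc A)\<^sup>*\<^sup>*"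

definition joined :: "('e \<Rightarrow> 'v set) \<Rightarrow> 'e set \<Rightarrow> 'e \<Rightarrow> bool" where
  "joined inc A x \<longleftrightarrow> (\<exists>u v. inc x = {u, v} \<and> conn inc A u v)"

lemma conn_refl: "conn inc A u u"
  unfolding conn_def by simp

lemma adj_sym: "adj_in inc A u v \<Longrightarrow> adj_in inc A v u"
  unfolding adj_in_def by (simp add: insert_commute)

lemma conn_sym: "conn inc A u v \<Longrightarrow> conn inc A v u"
  unfolding conn_def
proof (induction rule: rtranclp_induct)
  case base then show ?case by simp
next
  case (step b c)
  then show ?case using adj_sym[OF step(2)] by (simp add: converse_rtranclp_into_rtranclp)
qed

lemma conn_trans: "conn inc A u v \<Longrightarrow> conn inc A v w \<Longrightarrow> conn inc A u w"
  unfolding conn_def by simp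

lemma conn_edge: "x \<in> A \<Longrightarrow> inc x = {u, v} \<Longrightarrow> conn inc A u v"
  unfolding conn_def adj_in_def by (intro r_into_rtranclp) blast

lemma conn_mono: "A \<subseteq> B \<Longrightarrow> conn inc A u v \<Longrightarrow> conn inc B u v"
  unfolding conn_def
proof -
  assume AB: "A \<subseteq> B" and c: "(adj_in inc A)\<^sup>*\<^sup>* u v"
  from c show "(adj_in inc B)\<^sup>*\<^sup>* u v"
  proof (induction rule: rtranclp_induct)
    case base then show ?case by simp
  next
    case (step b c)
    have "adj_in inc B b c" using step(2) AB unfolding adj_in_def by blast
    then show ?case using step(3) by simp
  qed
qed

lemma conn_empty: "conn inc {} u v \<longleftrightarrow> u = v"
proof
  assume "conn inc {} u v"
  then show "u = v" unfolding conn_def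
    by (induction rule: rtranclp_induct) (auto simp: adj_in_def)
qed (simp add: conn_refl)

lemma conn_insert:
  assumes x: "inc x = {u, v}"
  shows "conn inc (insert x A) a b \<longleftrightarrow>
    conn inc A a b \<or> (conn inc A a u \<and> conn inc A v b) \<or> (conn inc A a v \<and> conn inc A u b)"
proof
  assume "conn inc (insert x A) a b"
  then show "conn inc A a b \<or> (conn inc A a u \<and> conn inc A v b) \<or> (conn inc A a v \<and> conn inc A u b)"
    unfolding conn_def[of inc "insert x A"]
  proof (induction rule: rtranclp_induct)
    case base then show ?case by (simp add: conn_refl)
  next
    case (step b c)
    show ?case
    proof (cases "adj_in inc A b c")
      case True
      then have bc: "conn inc A b c" unfolding conn_def by simp
      then show ?thesis using step(3) conn_trans by metis
    next
      case False
      then have "inc x = {b, c}" using step(2) unfolding adj_in_def by blast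
      then have bc: "(b = u \<and> c = v) \<or> (b = v \<and> c = u)" using x by (auto simp: doubleton_eq_iff)
      show ?thesis using step(3) bc conn_refl conn_trans by metis
    qed
  qed
next
  have sub: "A \<subseteq> insert x A" by blast
  have uv: "conn inc (insert x A) u v" using conn_edge[of x "insert x A" inc u v] x by simp
  then have vu: "conn inc (insert x A) v u" by (rule conn_sym)
  assume "conn inc A a b \<or> (conn inc A a u \<and> conn inc A v b) \<or> (conn inc A a v \<and> conn inc A u b)"
  then show "conn inc (insert x A) a b"
    using conn_mono[OF sub] uv vu conn_trans by metis
qed

definition cls :: "'v set \<Rightarrow> ('e \<Rightarrow> 'v set) \<Rightarrow> 'e set \<Rightarrow> 'v \<Rightarrow> 'v set" where
  "cls V inc A a = {b\<in>V. conn inc A a b}"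

lemma nc_cls: "num_comps V inc A = card (cls V inc A ` V)"
proof -
  have "V // {(u, v). u \<in> V \<and> v \<in> V \<and> (adj_in inc A)\<^sup>*\<^sup>* u v} = cls V inc A ` V"
    unfolding quotient_def cls_def conn_def by auto
  then show ?thesis unfolding num_comps_def by simp
qed

lemma nc_le: "finite V \<Longrightarrow> num_comps V inc A \<le> card V"
  unfolding nc_cls by (rule card_image_le)

lemma nc_ge1: "finite V \<Longrightarrow> V \<noteq> {} \<Longrightarrow> 1 \<le> num_comps V inc A"
  unfolding nc_cls by (simp add: Suc_leI card_gt_0_iff)

lemma nc_empty: "num_comps V inc {} = card V"
proof -
  have "cls V inc {} ` V = (\<lambda>a. {a}) ` V" unfolding cls_def conn_empty by auto
  then show ?thesis unfolding nc_cls by (simp add: card_image)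
qed

lemma cls_eq: "conn inc A a b \<Longrightarrow> cls V inc A a = cls V inc A b"
  unfolding cls_def using conn_sym conn_trans by metis

lemma nc_insert_conn:
  assumes x: "inc x = {u, v}" and c: "conn inc A u v"
  shows "num_comps V inc (insert x A) = num_comps V inc A"
proof -
  have "\<And>a b. conn inc (insert x A) a b \<longleftrightarrow> conn inc A a b"
    using conn_insert[of inc x u v, OF x] c conn_trans conn_sym by metis
  then have "cls V inc (insert x A) = cls V inc A" unfolding cls_def by (intro ext) simp
  then show ?thesis unfolding nc_cls by simp
qed

lemma clS_aux:
  assumes x: "inc x = {u, v}" and au: "conn inc A a u" and c: "\<not> conn inc A u v"
  shows "conn inc (insert x A) a b \<longleftrightarrow> conn inc A u b \<or> conn inc A v b"
proof -
  have ua: "conn inc A u a" using conn_sym[OF au] .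
  have nav: "\<not> conn inc A a v"
  proof
    assume "conn inc A a v" then have "conn inc A u v" using conn_trans[OF ua] by blast
    then show False using c by blast
  qed
  have e: "conn inc (insert x A) a b \<longleftrightarrow>
    conn inc A a b \<or> (conn inc A a u \<and> conn inc A v b) \<or> (conn inc A a v \<and> conn inc A u b)"
    using conn_insert[of inc x u v A a b, OF x] .
  have "conn inc A a b \<longleftrightarrow> conn inc A u b" using conn_trans[OF ua, of b] conn_trans[OF au, of b] by blast
  then show ?thesis using e nav au by blast
qed

lemma clN_aux:
  assumes x: "inc x = {u, v}" and au: "\<not> conn inc A a u" and av: "\<not> conn inc A a v"
  shows "conn inc (insert x A) a b \<longleftrightarrow> conn inc A a b"
  using conn_insert[of inc x u v A a b, OF x] au av by blast

lemma nc_insert_nconn: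
  assumes fV: "finite V" and x: "inc x = {u, v}" and uV: "u \<in> V" and vV: "v \<in> V" and c: "\<not> conn inc A u v"
  shows "num_comps V inc (insert x A) + 1 = num_comps V inc A"
proof -
  let ?cl = "cls V inc A" and ?cl' = "cls V inc (insert x A)"
  define S where "S = ?cl u \<union> ?cl v"
  have uu: "u \<in> ?cl u" "v \<in> ?cl v" using uV vV by (simp_all add: cls_def conn_refl)
  then have uS: "u \<in> S" "v \<in> S" unfolding S_def by auto
  have cl'S: "?cl' a = S" if "a \<in> S" for a
  proof -
    have "conn inc A u a \<or> conn inc A v a" using that unfolding S_def cls_def by auto
    have "\<And>b. conn inc (insert x A) a b \<longleftrightarrow> conn inc A u b \<or> conn inc A v b"
    proof -
      fix b
      show "conn inc (insert x A) a b \<longleftrightarrow> conn inc A u b \<or> conn inc A v b"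
      proof (cases "conn inc A u a")
        case True
        then show ?thesis using clS_aux[of inc x u v, OF x conn_sym[OF True] c] by blast
      next
        case False
        then have va: "conn inc A v a" using \<open>conn inc A u a \<or> conn inc A v a\<close> by blast
        have x': "inc x = {v, u}" using x by (simp add: insert_commute)
        have c': "\<not> conn inc A v u" using c conn_sym[of inc A v u] by blast
        show ?thesis using clS_aux[of inc x v u, OF x' conn_sym[OF va] c'] by blast
      qed
    qed
    then show ?thesis unfolding S_def cls_def by auto
  qed
  have cl'N: "?cl' a = ?cl a" if "a \<in> V - S" for a
  proof -
    have "\<not> conn inc A a u" "\<not> conn inc A a v" using that unfolding S_def cls_def by (auto dest: conn_sym)
    then have "\<And>b. conn inc (insert x A) a b \<longleftrightarrow> conn inc A a b"
      using clN_aux[of inc x u v, OF x] by blast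
    then show ?thesis unfolding cls_def by auto
  qed
  have SV: "S \<subseteq> V" unfolding S_def cls_def by auto
  have img': "?cl' ` V = insert S (?cl ` (V - S))"
  proof -
    have "V = S \<union> (V - S)" using SV by blast
    then have "?cl' ` V = ?cl' ` S \<union> ?cl' ` (V - S)" by (metis image_Un)
    also have "?cl' ` S = {S}" using cl'S uS by blast
    also have "?cl' ` (V - S) = ?cl ` (V - S)" using cl'N by (intro image_cong) auto
    finally show ?thesis by simp
  qed
  have img: "?cl ` V = insert (?cl u) (insert (?cl v) (?cl ` (V - S)))"
  proof -
    have "V = S \<union> (V - S)" using SV by blast
    then have "?cl ` V = ?cl ` S \<union> ?cl ` (V - S)" by (metis image_Un)
    also have "?cl ` S = {?cl u, ?cl v}"
    proof
      show "?cl ` S \<subseteq> {?cl u, ?cl v}"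
      proof
        fix X assume "X \<in> ?cl ` S"
        then obtain a where a: "a \<in> S" "X = ?cl a" by blast
        then have "conn inc A u a \<or> conn inc A v a" unfolding S_def cls_def by blast
        then have "?cl u = ?cl a \<or> ?cl v = ?cl a" using cls_eq[of inc A u a V] cls_eq[of inc A v a V] by blast
        then show "X \<in> {?cl u, ?cl v}" using a by blast
      qed
      show "{?cl u, ?cl v} \<subseteq> ?cl ` S" using uS by auto
    qed
    finally show ?thesis by simp
  qed
  have notin: "?cl a \<noteq> ?cl u \<and> ?cl a \<noteq> ?cl v \<and> ?cl a \<noteq> S" if "a \<in> V - S" for a
  proof -
    have "u \<notin> ?cl a" "v \<notin> ?cl a" using that unfolding S_def cls_def by (auto dest: conn_sym)
    then show ?thesis using uu uS by blast
  qed
  have "v \<notin> ?cl u" using c by (simp add: cls_def)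
  then have uvne: "?cl u \<noteq> ?cl v" using uu by blast
  have fin: "finite (?cl ` (V - S))" using fV by simp
  have n1: "S \<notin> ?cl ` (V - S)"
  proof
    assume "S \<in> ?cl ` (V - S)"
    then obtain a where "a \<in> V - S" "S = ?cl a" by blast
    then show False using notin[of a] by blast
  qed
  have n2: "?cl v \<notin> ?cl ` (V - S)"
  proof
    assume "?cl v \<in> ?cl ` (V - S)"
    then obtain a where "a \<in> V - S" "?cl v = ?cl a" by blast
    then show False using notin[of a] by blast
  qed
  have n3: "?cl u \<notin> insert (?cl v) (?cl ` (V - S))"
  proof
    assume "?cl u \<in> insert (?cl v) (?cl ` (V - S))"
    then have "?cl u \<in> ?cl ` (V - S)" using uvne by blast
    then obtain a where "a \<in> V - S" "?cl u = ?cl a" by blast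
    then show False using notin[of a] by blast
  qed
  have "card (?cl' ` V) = Suc (card (?cl ` (V - S)))" unfolding img' using card_insert_disjoint[OF fin n1] .
  moreover have "card (?cl ` V) = Suc (Suc (card (?cl ` (V - S))))" unfolding img
    using card_insert_disjoint[OF _ n3] card_insert_disjoint[OF fin n2] fin by simp
  ultimately show ?thesis unfolding nc_cls by simp
qed




context
  fixes V :: "'v set" and E :: "'e set" and inc :: "'e \<Rightarrow> 'v set"
  assumes mg: "multigraph V E inc"
begin

lemma fV: "finite V" using mg by (simp add: multigraph_def)
lemma fE: "finite E" using mg by (simp add: multigraph_def)

lemma edge_ends: assumes "x \<in> E" shows "\<exists>u v. u \<in> V \<and> v \<in> V \<and> inc x = {u, v}"
proof -
  have "\<forall>e\<in>E. inc e \<subseteq> V \<and> 1 \<le> card (inc e) \<and> card (inc e) \<le> 2"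
    using mg unfolding multigraph_def by blast
  then have s: "inc x \<subseteq> V" and c: "1 \<le> card (inc x)" "card (inc x) \<le> 2"
    using assms by blast+
  then have "card (inc x) = 1 \<or> card (inc x) = 2" by linarith
  then show ?thesis
  proof
    assume "card (inc x) = 1"
    then have "card (inc x) = Suc 0" by simp
    then obtain u where "inc x = {u}" using card_1_singleton_iff[THEN iffD1] by meson
    then show ?thesis using s by (intro exI[of _ u] exI[of _ u]) auto
  next
    assume "card (inc x) = 2"
    then obtain u v where "inc x = {u, v}" using card_2_iff[THEN iffD1] by meson
    then show ?thesis using s by (intro exI[of _ u] exI[of _ v]) auto
  qed
qed

lemma joined_iff: assumes "inc x = {u, v}" shows "joined inc A x \<longleftrightarrow> conn inc A u v"
proof
  assume "joined inc A x"
  then obtain a b where ab: "inc x = {a, b}" "conn inc A a b" unfolding joined_def by blast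
  then have "(a = u \<and> b = v) \<or> (a = v \<and> b = u)" using assms by (auto simp: doubleton_eq_iff)
  then show "conn inc A u v" using ab(2) conn_sym[of inc A a b] by blast
qed (use assms in \<open>auto simp: joined_def\<close>)

abbreviation "rk_g A \<equiv> rank_of V inc A"

lemma rank_insert: assumes x: "x \<in> E"
  shows "rk_g (insert x A) = (if joined inc A x then rk_g A else Suc (rk_g A))"
proof -
  obtain u v where uv: "u \<in> V" "v \<in> V" "inc x = {u, v}" using edge_ends[OF x] by blast
  show ?thesis
  proof (cases "conn inc A u v")
    case True
    then show ?thesis using nc_insert_conn[of inc x u v A V, OF uv(3) True] joined_iff[OF uv(3)]
      unfolding rank_of_def by simp
  next
    case False
    have e: "num_comps V inc (insert x A) + 1 = num_comps V inc A"
      using nc_insert_nconn[OF fV uv(3) uv(1) uv(2) False] .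
    have "num_comps V inc A \<le> card V" using nc_le[OF fV] .
    then show ?thesis using e False joined_iff[OF uv(3)] unfolding rank_of_def by simp
  qed
qed

lemma rank_empty: "rk_g {} = 0"
  unfolding rank_of_def nc_empty by simp

lemma rank_insert_le: "x \<in> E \<Longrightarrow> rk_g (insert x A) \<le> Suc (rk_g A)"
  using rank_insert by simp

lemma rank_insert_ge: "x \<in> E \<Longrightarrow> rk_g A \<le> rk_g (insert x A)"
  using rank_insert by simp

lemma rank_le_card: "finite A \<Longrightarrow> A \<subseteq> E \<Longrightarrow> rk_g A \<le> card A"
proof (induction A rule: finite_induct)
  case empty then show ?case by (simp add: rank_empty)
next
  case (insert x F)
  then show ?case using rank_insert_le[of x F] by simp
qed

lemma rank_union_ge: "finite C \<Longrightarrow> C \<subseteq> E \<Longrightarrow> rk_g A \<le> rk_g (A \<union> C)"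
proof (induction C rule: finite_induct)
  case empty then show ?case by simp
next
  case (insert x F)
  then show ?case using rank_insert_ge[of x "A \<union> F"] by simp
qed

lemma rank_union_le: "finite C \<Longrightarrow> C \<subseteq> E \<Longrightarrow> rk_g (A \<union> C) \<le> rk_g A + card C"
proof (induction C rule: finite_induct)
  case empty then show ?case by simp
next
  case (insert x F)
  then show ?case using rank_insert_le[of x "A \<union> F"] by simp
qed

lemma rank_mono: "A \<subseteq> B \<Longrightarrow> B \<subseteq> E \<Longrightarrow> rk_g A \<le> rk_g B"
proof -
  assume AB: "A \<subseteq> B" and BE: "B \<subseteq> E"
  have "finite (B - A)" using BE fE finite_subset by blast
  then have "rk_g A \<le> rk_g (A \<union> (B - A))" using rank_union_ge BE by blast
  moreover have "A \<union> (B - A) = B" using AB by blast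
  ultimately show ?thesis by simp
qed

lemma rank_joined_all: "finite C \<Longrightarrow> C \<subseteq> E \<Longrightarrow> (\<forall>y\<in>C. joined inc A y) \<Longrightarrow> rk_g (A \<union> C) = rk_g A"
proof (induction C rule: finite_induct)
  case empty then show ?case by simp
next
  case (insert x F)
  have "joined inc A x" using insert.prems by simp
  then have "joined inc (A \<union> F) x" unfolding joined_def using conn_mono[of A "A \<union> F" inc] by blast
  then have "rk_g (insert x (A \<union> F)) = rk_g (A \<union> F)" using rank_insert[of x "A \<union> F"] insert.prems by simp
  then show ?case using insert by simp
qed

lemma joined_mem: assumes "x \<in> A" "x \<in> E" shows "joined inc A x"
proof -
  obtain u v where uv: "inc x = {u, v}" using edge_ends[OF assms(2)] by blast
  have "conn inc A u v" using conn_edge[of x A inc u v, OF assms(1) uv] .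
  then show ?thesis unfolding joined_def using uv by blast
qed

definition IG :: "'e set set" where "IG = {A. A \<subseteq> E \<and> card A \<le> rk_g A}"

lemma IG_mem: "A \<in> IG \<longleftrightarrow> A \<subseteq> E \<and> card A \<le> rk_g A"
  unfolding IG_def by simp

lemma IG_eq: "A \<in> IG \<Longrightarrow> rk_g A = card A"
proof -
  assume A: "A \<in> IG"
  then have AE: "A \<subseteq> E" and c: "card A \<le> rk_g A" unfolding IG_def by blast+
  have "finite A" using AE fE finite_subset by blast
  then have "rk_g A \<le> card A" using rank_le_card AE by blast
  then show "rk_g A = card A" using c by simp
qed

lemma matroid_IG: "matroid E IG"
  unfolding matroid_def
proof (intro conjI ballI allI impI)
  show "finite E" using fE .
  show "IG \<subseteq> Pow E" unfolding IG_def by blast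
  show "{} \<in> IG" unfolding IG_def by simp
next
  fix A B assume A: "A \<in> IG" and BA: "B \<subseteq> A"
  have AE: "A \<subseteq> E" using A unfolding IG_def by blast
  have fA: "finite A" using AE fE finite_subset by blast
  have "rk_g (B \<union> (A - B)) \<le> rk_g B + card (A - B)"
    using rank_union_le[of "A - B" B] fA AE by blast
  moreover have "B \<union> (A - B) = A" using BA by blast
  moreover have "card (A - B) = card A - card B" using fA BA card_Diff_subset finite_subset by metis
  moreover have "card A \<le> rk_g A" using A unfolding IG_def by blast
  moreover have "card B \<le> card A" using fA BA card_mono by blast
  ultimately have "card B \<le> rk_g B" by simp
  then show "B \<in> IG" using AE BA unfolding IG_def by blast
next
  fix F G assume F: "F \<in> IG" and G: "G \<in> IG" and c: "card F < card G"
  have FE: "F \<subseteq> E" and GE: "G \<subseteq> E" using F G unfolding IG_def by blast+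
  have fF: "finite F" and fG: "finite G" using FE GE fE finite_subset by blast+
  show "\<exists>x\<in>G - F. insert x F \<in> IG"
  proof (rule ccontr)
    assume no: "\<not> (\<exists>x\<in>G - F. insert x F \<in> IG)"
    have allj: "\<forall>y\<in>G. joined inc F y"
    proof
      fix y assume yG: "y \<in> G"
      show "joined inc F y"
      proof (cases "y \<in> F")
        case True then show ?thesis using joined_mem GE yG by blast
      next
        case False
        show ?thesis
        proof (rule ccontr)
          assume nj: "\<not> joined inc F y"
          have "rk_g (insert y F) = Suc (rk_g F)" using rank_insert[of y F] nj yG GE by auto
          moreover have "card (insert y F) = Suc (card F)" using False fF by simp
          ultimately have "insert y F \<in> IG" using F IG_eq[OF F] yG GE unfolding IG_def by auto
          then show False using no yG False by blast
        qed
      qed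
    qed
    have "rk_g (F \<union> G) = rk_g F" using rank_joined_all[OF fG GE allj] .
    moreover have "rk_g G \<le> rk_g (G \<union> F)" using rank_union_ge[OF fF FE] .
    moreover have "G \<union> F = F \<union> G" by blast
    ultimately have "rk_g G \<le> rk_g F" by simp
    then show False using IG_eq[OF F] IG_eq[OF G] c by simp
  qed
qed

lemma spanning: "finite C \<Longrightarrow> C \<subseteq> E \<Longrightarrow> \<exists>F. F \<subseteq> C \<and> F \<in> IG \<and> rk_g F = rk_g C"
proof (induction C rule: finite_induct)
  case empty then show ?case unfolding IG_def by simp
next
  case (insert x C)
  then obtain F where F: "F \<subseteq> C" "F \<in> IG" "rk_g F = rk_g C" by auto
  have xE: "x \<in> E" using insert.prems by simp
  have CE: "C \<subseteq> E" using insert.prems by simp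
  show ?case
  proof (cases "joined inc F x")
    case True
    obtain u v where uv: "inc x = {u, v}" using edge_ends[OF xE] by blast
    have cF: "conn inc F u v" using True joined_iff[OF uv] by blast
    have "conn inc C u v" by (rule conn_mono[OF F(1) cF])
    then have "joined inc C x" using joined_iff[OF uv] by blast
    then have "rk_g (insert x C) = rk_g C" using rank_insert[OF xE] by simp
    then show ?thesis using F by (intro exI[of _ F]) auto
  next
    case False
    have xF: "x \<notin> F"
    proof
      assume "x \<in> F" then show False using False joined_mem[of x F] xE by blast
    qed
    have fF: "finite F" using F(1) insert.hyps(1) finite_subset by blast
    have r1: "rk_g (insert x F) = Suc (rk_g F)" using rank_insert[OF xE, of F] False by simp
    have "card (insert x F) = Suc (card F)" using xF fF by simp
    then have IF: "insert x F \<in> IG" using r1 IG_eq[OF F(2)] F(1) CE xE unfolding IG_def by auto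
    have "rk_g (insert x F) \<le> rk_g (insert x C)" using rank_mono[of "insert x F" "insert x C"] F(1) CE xE by blast
    moreover have "rk_g (insert x C) \<le> Suc (rk_g C)" using rank_insert_le[OF xE] .
    ultimately have "rk_g (insert x C) = rk_g (insert x F)" using r1 F(3) by simp
    then show ?thesis using IF F(1) by (intro exI[of _ "insert x F"]) auto
  qed
qed

lemma rk_IG: "rk IG = rk_g E"
proof -
  obtain F where F: "F \<subseteq> E" "F \<in> IG" "rk_g F = rk_g E" using spanning[OF fE] by blast
  have le: "\<And>A. A \<in> IG \<Longrightarrow> card A \<le> rk_g E"
  proof -
    fix A assume A: "A \<in> IG"
    then have "A \<subseteq> E" unfolding IG_def by blast
    then show "card A \<le> rk_g E" using IG_eq[OF A] rank_mono[of A E] by simp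
  qed
  show ?thesis using rk_eqI[OF matroid_IG le F(2)] F IG_eq[OF F(2)] by simp
qed

end



definition gpath :: "('e \<Rightarrow> 'v set) \<Rightarrow> 'e set \<Rightarrow> 'v \<Rightarrow> 'v \<Rightarrow> 'v list \<Rightarrow> 'e list \<Rightarrow> bool" where
  "gpath inc A u v ws es \<longleftrightarrow> length ws = Suc (length es) \<and> ws ! 0 = u \<and> ws ! (length es) = v \<and>
     set es \<subseteq> A \<and> (\<forall>j<length es. inc (es ! j) = {ws ! j, ws ! Suc j})"

lemma gpath_conn: assumes p: "gpath inc A u v ws es" shows "conn inc A u v"
proof -
  have L: "length ws = Suc (length es)" and h0: "ws ! 0 = u" and hv: "ws ! (length es) = v"
    and S: "set es \<subseteq> A" and adj: "\<forall>j<length es. inc (es ! j) = {ws ! j, ws ! Suc j}"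
    using p unfolding gpath_def by blast+
  have "j \<le> length es \<longrightarrow> conn inc A u (ws ! j)" for j
  proof (induction j)
    case 0 then show ?case using h0 conn_refl by simp
  next
    case (Suc j)
    show ?case
    proof
      assume j: "Suc j \<le> length es"
      then have c1: "conn inc A u (ws ! j)" using Suc.IH by simp
      have jl: "j < length es" using j by simp
      have eA: "es ! j \<in> A" using S jl nth_mem by blast
      have "conn inc A (ws ! j) (ws ! Suc j)" using conn_edge[of "es ! j" A inc "ws ! j" "ws ! Suc j", OF eA] adj jl by blast
      then show "conn inc A u (ws ! Suc j)" using conn_trans[OF c1] by blast
    qed
  qed
  then show ?thesis using hv by blast
qed

lemma gpath_distinct: assumes p: "gpath inc A u v ws es" and d: "distinct ws" shows "distinct es"
proof -
  have L: "length ws = Suc (length es)" and adj: "\<forall>j<length es. inc (es ! j) = {ws ! j, ws ! Suc j}"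
    using p unfolding gpath_def by blast+
  show ?thesis unfolding distinct_conv_nth
  proof (intro allI impI)
    fix i j assume i: "i < length es" and j: "j < length es" and ij: "i \<noteq> j"
    show "es ! i \<noteq> es ! j"
    proof
      assume eq: "es ! i = es ! j"
      have "{ws ! i, ws ! Suc i} = {ws ! j, ws ! Suc j}" using adj i j eq by metis
      then have a: "ws ! i = ws ! j \<or> ws ! i = ws ! Suc j" and b: "ws ! j = ws ! i \<or> ws ! j = ws ! Suc i"
        by blast+
      have "ws ! i = ws ! j \<longleftrightarrow> i = j" using nth_eq_iff_index_eq[OF d] i j L by simp
      moreover have "ws ! i = ws ! Suc j \<longleftrightarrow> i = Suc j" using nth_eq_iff_index_eq[OF d] i j L by simp
      moreover have "ws ! j = ws ! Suc i \<longleftrightarrow> j = Suc i" using nth_eq_iff_index_eq[OF d] i j L by simp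
      ultimately show False using a b ij by auto
    qed
  qed
qed

lemma conn_gpath: assumes "conn inc A u v" shows "\<exists>ws es. gpath inc A u v ws es \<and> distinct ws"
  using assms unfolding conn_def
proof (induction rule: rtranclp_induct)
  case base
  have "gpath inc A u u [u] []" unfolding gpath_def by simp
  then show ?case by fastforce
next
  case (step b c)
  obtain ws es where p: "gpath inc A u b ws es" and d: "distinct ws" using step.IH by blast
  have L: "length ws = Suc (length es)" and h0: "ws ! 0 = u" and hv: "ws ! (length es) = b"
    and S: "set es \<subseteq> A" and adj: "\<forall>j<length es. inc (es ! j) = {ws ! j, ws ! Suc j}"
    using p unfolding gpath_def by blast+
  obtain e where e: "e \<in> A" "inc e = {b, c}" using step.hyps(2) unfolding adj_in_def by blast
  show ?case
  proof (cases "c \<in> set ws")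
    case True
    then obtain j where j: "j < length ws" "ws ! j = c" by (auto simp: in_set_conv_nth)
    define ws' where "ws' = take (Suc j) ws"
    define es' where "es' = take j es"
    have Le': "length es' = j" unfolding es'_def using j L by simp
    have "gpath inc A u c ws' es'" unfolding gpath_def
    proof (intro conjI)
      show "length ws' = Suc (length es')" unfolding ws'_def Le' using j by simp
      show "ws' ! 0 = u" unfolding ws'_def using h0 by simp
      show "ws' ! length es' = c" unfolding ws'_def Le' using j by simp
      show "set es' \<subseteq> A" unfolding es'_def using S set_take_subset by fast
      show "\<forall>t<length es'. inc (es' ! t) = {ws' ! t, ws' ! Suc t}"
      proof (intro allI impI)
        fix t assume t: "t < length es'"
        then have tj: "t < j" using Le' by simp
        have "t < length es" using tj j L by simp
        then show "inc (es' ! t) = {ws' ! t, ws' ! Suc t}"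
          unfolding es'_def ws'_def using adj tj by simp
      qed
    qed
    moreover have "distinct ws'" unfolding ws'_def using d by simp
    ultimately show ?thesis by blast
  next
    case False
    define ws' where "ws' = ws @ [c]"
    define es' where "es' = es @ [e]"
    have "gpath inc A u c ws' es'" unfolding gpath_def
    proof (intro conjI)
      show "length ws' = Suc (length es')" unfolding ws'_def es'_def using L by simp
      show "ws' ! 0 = u" unfolding ws'_def using h0 L by (simp add: nth_append)
      show "ws' ! length es' = c" unfolding ws'_def es'_def using L by (simp add: nth_append)
      show "set es' \<subseteq> A" unfolding es'_def using S e by simp
      show "\<forall>t<length es'. inc (es' ! t) = {ws' ! t, ws' ! Suc t}"
      proof (intro allI impI)
        fix t assume t: "t < length es'"
        show "inc (es' ! t) = {ws' ! t, ws' ! Suc t}"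
        proof (cases "t < length es")
          case True
          then show ?thesis unfolding es'_def ws'_def using adj L by (simp add: nth_append)
        next
          case False
          then have "t = length es" using t unfolding es'_def by simp
          then show ?thesis unfolding es'_def ws'_def using e hv L by (simp add: nth_append)
        qed
      qed
    qed
    moreover have "distinct ws'" unfolding ws'_def using d False by simp
    ultimately show ?thesis by blast
  qed
qed

context
  fixes V :: "'v set" and E :: "'e set" and inc :: "'e \<Rightarrow> 'v set"
  assumes mg: "multigraph V E inc"
begin

lemma IG_mem2: "A \<in> IG V E inc \<longleftrightarrow> A \<subseteq> E \<and> card A \<le> rank_of V inc A"
  using IG_mem[OF mg] by simp

lemma inc_sub: "x \<in> E \<Longrightarrow> inc x \<subseteq> V"
  using mg unfolding multigraph_def by blast

lemma gpath_V: assumes p: "gpath inc A u v ws es" and AE: "A \<subseteq> E" and uV: "u \<in> V"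
  shows "set ws \<subseteq> V"
proof
  have L: "length ws = Suc (length es)" and h0: "ws ! 0 = u"
    and S: "set es \<subseteq> A" and adj: "\<forall>j<length es. inc (es ! j) = {ws ! j, ws ! Suc j}"
    using p unfolding gpath_def by blast+
  fix w assume "w \<in> set ws"
  then obtain t where t: "t < length ws" "ws ! t = w" by (auto simp: in_set_conv_nth)
  show "w \<in> V"
  proof (cases t)
    case 0 then show ?thesis using t h0 uV by simp
  next
    case (Suc s)
    then have s: "s < length es" using t L by simp
    have "es ! s \<in> E" using S AE s nth_mem by blast
    then have "inc (es ! s) \<subseteq> V" by (rule inc_sub)
    moreover have "ws ! Suc s \<in> inc (es ! s)" using adj s by simp
    ultimately show ?thesis using t Suc by blast
  qed
qed

lemma cycle_dep: assumes "has_cycle_len V E inc l"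
  shows "\<exists>A. A \<subseteq> E \<and> A \<notin> IG V E inc \<and> card A = l"
proof -
  obtain vs es where l1: "l \<ge> 1" and lv: "length vs = l" and le: "length es = l"
    and dv: "distinct vs" and de: "distinct es" and sv: "set vs \<subseteq> V" and se: "set es \<subseteq> E"
    and adj: "\<forall>j<l. inc (es ! j) = {vs ! j, vs ! ((j + 1) mod l)}"
    using assms unfolding has_cycle_len_def by blast
  define p where "p = l - 1"
  have lp: "l = Suc p" unfolding p_def using l1 by simp
  define es' where "es' = take p es"
  define x where "x = es ! p"
  have "take (Suc p) es = es' @ [x]" unfolding es'_def x_def using le lp take_Suc_conv_app_nth[of p es] by simp
  then have split: "es = es' @ [x]" using le lp by simp
  have Le': "length es' = p" unfolding es'_def using le lp by simp
  have setes: "set es = insert x (set es')" using split by simp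
  have xE: "x \<in> E" using se setes by blast
  have sE': "set es' \<subseteq> E" using se setes by blast
  have gp: "gpath inc (set es') (vs ! 0) (vs ! p) vs es'" unfolding gpath_def
  proof (intro conjI)
    show "length vs = Suc (length es')" using lv lp Le' by simp
    show "vs ! 0 = vs ! 0" ..
    show "vs ! length es' = vs ! p" using Le' by simp
    show "set es' \<subseteq> set es'" ..
    show "\<forall>j<length es'. inc (es' ! j) = {vs ! j, vs ! Suc j}"
    proof (intro allI impI)
      fix j assume j: "j < length es'"
      then have jp: "j < p" using Le' by simp
      have "inc (es ! j) = {vs ! j, vs ! ((j + 1) mod l)}" using adj jp lp by simp
      moreover have "(j + 1) mod l = Suc j" using jp lp by simp
      moreover have "es' ! j = es ! j" unfolding es'_def using jp by simp
      ultimately show "inc (es' ! j) = {vs ! j, vs ! Suc j}" by simp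
    qed
  qed
  have c: "conn inc (set es') (vs ! p) (vs ! 0)" using conn_sym[OF gpath_conn[OF gp]] .
  have "inc x = {vs ! p, vs ! ((p + 1) mod l)}" unfolding x_def using adj lp by simp
  moreover have "(p + 1) mod l = 0" using lp by simp
  ultimately have ix: "inc x = {vs ! p, vs ! 0}" by simp
  have j: "joined inc (set es') x" unfolding joined_def using ix c by blast
  have "rank_of V inc (set es) = rank_of V inc (set es')"
    using rank_insert[OF mg xE, of "set es'"] j setes by simp
  also have "\<dots> \<le> card (set es')" using rank_le_card[OF mg _ sE'] by simp
  also have "\<dots> \<le> p" using card_length[of es'] Le' by simp
  finally have r: "rank_of V inc (set es) \<le> p" .
  have ce: "card (set es) = l" using distinct_card[OF de] le by simp
  have "set es \<notin> IG V E inc" unfolding IG_mem2 using r ce lp by simp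
  then show ?thesis using se ce by blast
qed

lemma dep_cycle: "finite A \<Longrightarrow> A \<subseteq> E \<Longrightarrow> A \<notin> IG V E inc \<Longrightarrow> \<exists>l\<le>card A. has_cycle_len V E inc l"
proof (induction A rule: finite_induct)
  case empty
  then show ?case unfolding IG_mem2 by simp
next
  case (insert x F)
  have xE: "x \<in> E" and FE: "F \<subseteq> E" using insert.prems by auto
  show ?case
  proof (cases "F \<in> IG V E inc")
    case False
    then obtain l where "l \<le> card F" "has_cycle_len V E inc l" using insert.IH FE by blast
    moreover have "card F \<le> card (insert x F)" using insert.hyps by simp
    ultimately show ?thesis by (intro exI[of _ l]) simp
  next
    case True
    have rF: "rank_of V inc F = card F" using IG_eq[OF mg True] .
    have jx: "joined inc F x"
    proof (rule ccontr)
      assume "\<not> joined inc F x"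
      then have "rank_of V inc (insert x F) = Suc (card F)" using rank_insert[OF mg xE, of F] rF by simp
      then have "insert x F \<in> IG V E inc" unfolding IG_mem2 using insert.hyps xE FE by simp
      then show False using insert.prems by blast
    qed
    obtain u v where uv: "u \<in> V" "v \<in> V" "inc x = {u, v}" using edge_ends[OF mg xE] by blast
    have cFuv: "conn inc F u v" using joined_iff[OF mg uv(3)] jx by blast
    obtain ws es where gp: "gpath inc F u v ws es" and dw: "distinct ws" using conn_gpath[OF cFuv] by blast
    have L: "length ws = Suc (length es)" and h0: "ws ! 0 = u" and hv: "ws ! (length es) = v"
      and S: "set es \<subseteq> F" and adj: "\<forall>j<length es. inc (es ! j) = {ws ! j, ws ! Suc j}"
      using gp unfolding gpath_def by blast+
    have de: "distinct es" using gpath_distinct[OF gp dw] .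
    define l where "l = Suc (length es)"
    define es2 where "es2 = es @ [x]"
    have xes: "x \<notin> set es" using S insert.hyps(2) by blast
    have cyc: "has_cycle_len V E inc l" unfolding has_cycle_len_def
    proof (intro conjI exI)
      show "1 \<le> l" unfolding l_def by simp
      show "length ws = l" unfolding l_def using L by simp
      show "length es2 = l" unfolding l_def es2_def by simp
      show "distinct ws" using dw .
      show "distinct es2" unfolding es2_def using de xes by simp
      show "set ws \<subseteq> V" using gpath_V[OF gp FE uv(1)] .
      show "set es2 \<subseteq> E" unfolding es2_def using S FE xE by auto
      show "\<forall>j<l. inc (es2 ! j) = {ws ! j, ws ! ((j + 1) mod l)}"
      proof (intro allI impI)
        fix j assume j: "j < l"
        show "inc (es2 ! j) = {ws ! j, ws ! ((j + 1) mod l)}"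
        proof (cases "j < length es")
          case True
          have "(j + 1) mod l = Suc j" using True unfolding l_def by simp
          moreover have "es2 ! j = es ! j" unfolding es2_def using True by (simp add: nth_append)
          ultimately show ?thesis using adj True by simp
        next
          case False
          then have jj: "j = length es" using j unfolding l_def by simp
          have "(j + 1) mod l = 0" unfolding l_def jj by simp
          moreover have "es2 ! j = x" unfolding es2_def jj by simp
          ultimately show ?thesis using uv(3) h0 hv jj by (simp add: insert_commute)
        qed
      qed
    qed
    have "length es = card (set es)" using distinct_card[OF de] by simp
    also have "\<dots> \<le> card F" using card_mono[OF insert.hyps(1) S] .
    finally have "l \<le> card (insert x F)" unfolding l_def using insert.hyps by simp
    then show ?thesis using cyc by blast
  qed
qed

lemma dep_iff: "dep E (IG V E inc) k \<longleftrightarrow> (\<exists>l\<le>k. has_cycle_len V E inc l)"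
proof
  assume "dep E (IG V E inc) k"
  then obtain A where A: "A \<subseteq> E" "A \<notin> IG V E inc" "card A \<le> k" unfolding dep_def by blast
  have "finite A" using A(1) fE[OF mg] finite_subset by blast
  then obtain l where "l \<le> card A" "has_cycle_len V E inc l" using dep_cycle A by blast
  then show "\<exists>l\<le>k. has_cycle_len V E inc l" using A(3) by (intro exI[of _ l]) simp
next
  assume "\<exists>l\<le>k. has_cycle_len V E inc l"
  then obtain l where l: "l \<le> k" "has_cycle_len V E inc l" by blast
  then obtain A where "A \<subseteq> E" "A \<notin> IG V E inc" "card A = l" using cycle_dep by blast
  then show "dep E (IG V E inc) k" unfolding dep_def using l(1) by (intro exI[of _ A]) simp
qed

lemma tutte_eq: "tutte_in_x V E inc 1 = PP (IG V E inc)"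
proof -
  have rk: "rk (IG V E inc) = rank_of V inc E" using rk_IG[OF mg] .
  have "tutte_in_x V E inc 1 = (\<Sum>A\<in>IG V E inc. XX ^ (rk (IG V E inc) - card A))"
    unfolding tutte_in_x_def
  proof (rule sum.mono_neutral_cong_right)
    show "finite (Pow E)" using fE[OF mg] by simp
    show "IG V E inc \<subseteq> Pow E" using IG_mem2 by blast
    show "\<forall>A\<in>Pow E - IG V E inc. smult ((1 - 1) ^ (card A - rank_of V inc A)) (XX ^ (rank_of V inc E - rank_of V inc A)) = 0"
    proof
      fix A assume "A \<in> Pow E - IG V E inc"
      then have "card A - rank_of V inc A \<noteq> 0" using IG_mem2 by auto
      then show "smult ((1 - 1) ^ (card A - rank_of V inc A)) (XX ^ (rank_of V inc E - rank_of V inc A)) = 0"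
        by simp
    qed
    fix A assume A: "A \<in> IG V E inc"
    have "rank_of V inc A = card A" using IG_eq[OF mg A] .
    then show "smult ((1 - 1) ^ (card A - rank_of V inc A)) (XX ^ (rank_of V inc E - rank_of V inc A)) =
      XX ^ (rk (IG V E inc) - card A)" using rk by simp
  qed
  then show ?thesis unfolding PP_def .
qed

end

theorem corollary3p8:
  fixes V :: "'v set" and E :: "'e set" and inc :: "'e \<Rightarrow> 'v set" and i :: nat
  assumes "multigraph V E inc"
    and "has_cycle V E inc"
  shows "int (girth V E inc) > int (card V) - int (num_comps V inc E) - int i
     \<longleftrightarrow> coeff (tutte_in_x V E inc 1) i
           = int_binom (int (card E) - int i - 1) (int (card V) - int (num_comps V inc E) - int i)"
proof -
  note mg = assms(1)
  define r where "r = rank_of V inc E"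
  define m where "m = card E"
  have ncle: "num_comps V inc E \<le> card V" using nc_le[OF fV[OF mg]] .
  have rint: "int (card V) - int (num_comps V inc E) = int r" unfolding r_def rank_of_def using ncle by simp
  have mI: "matroid E (IG V E inc)" using matroid_IG[OF mg] .
  have rk: "rk (IG V E inc) = r" unfolding r_def using rk_IG[OF mg] .
  have rm: "r \<le> m" unfolding m_def using rk_le_card[OF mI] rk by simp
  have T: "tutte_in_x V E inc 1 = PP (IG V E inc)" using tutte_eq[OF mg] .
  obtain l0 where l0: "has_cycle_len V E inc l0" using assms(2) unfolding has_cycle_def by blast
  show ?thesis
  proof (cases "r < i")
    case True
    have "coeff (PP (IG V E inc)) i = 0" using coeff_PP_hi[OF mI] rk True by simp
    moreover have "int_binom (int m - int i - 1) (int r - int i) = 0" unfolding int_binom_def using True by simp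
    ultimately show ?thesis unfolding T rint m_def[symmetric] using True by simp
  next
    case False
    then have ir: "i \<le> r" by simp
    have MA: "coeff (PP (IG V E inc)) i = real ((m - i - 1) choose (r - i)) \<longleftrightarrow>
        \<not> dep E (IG V E inc) (r - i)"
      using main_abs[OF mI, of i] rk ir unfolding m_def by simp
    have B: "int_binom (int m - int i - 1) (int r - int i) = real ((m - i - 1) choose (r - i))"
    proof (cases "i + 1 \<le> m")
      case True
      have "int m - int i - 1 = int (m - i - 1)" using True by simp
      moreover have "nat (int r - int i) = r - i" using ir by simp
      ultimately show ?thesis unfolding int_binom_def using ir
        by (simp add: binomial_gbinomial)
    next
      case False
      then have "m = i" "r = i" using rm ir by simp_all
      then show ?thesis unfolding int_binom_def by simp
    qed
    have G: "int r - int i < int (girth V E inc) \<longleftrightarrow> \<not> (\<exists>l\<le>r - i. has_cycle_len V E inc l)"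
    proof
      assume g: "int r - int i < int (girth V E inc)"
      show "\<not> (\<exists>l\<le>r - i. has_cycle_len V E inc l)"
      proof
        assume "\<exists>l\<le>r - i. has_cycle_len V E inc l"
        then obtain l where l: "l \<le> r - i" "has_cycle_len V E inc l" by blast
        have "girth V E inc \<le> l" unfolding girth_def using Least_le[of "has_cycle_len V E inc" l] l(2) .
        then show False using g l(1) ir by simp
      qed
    next
      assume n: "\<not> (\<exists>l\<le>r - i. has_cycle_len V E inc l)"
      have "has_cycle_len V E inc (girth V E inc)" unfolding girth_def using LeastI[of "has_cycle_len V E inc" l0] l0 .
      then have "\<not> girth V E inc \<le> r - i" using n by blast
      then show "int r - int i < int (girth V E inc)" using ir by simp
    qed
    show ?thesis unfolding T rint m_def[symmetric] B G MA dep_iff[OF mg] by simp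
  qed
qed


end
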